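(* Let $S$ be a simple $(l,r)$-framed algebra. Let $\alpha_1,\alpha_2\in C_S$, $(d,c)\in I_S$, $a_1\in S_{(0,\alpha_1)}$, $a_2\in S_{(0,\alpha_2)}$ and $v\in S_{(d,c)}$. Then $a_2\cdot(a_1\cdot v)=(-1)^{|\alpha_1\alpha_2|}a_1\cdot(a_2\cdot v)$ and $a_1\cdot(a_2\cdot v)=(a_1\cdot a_2)\cdot v$. In particular $A_S(0)=\bigoplus_{\alpha}S_{(0,\alpha)}$ is an associative algebra and $S$ is an $A_S(0)$-module.
   Context: Let $\mathrm{IS}=\{0,\frac12,\frac1{16}\}$ with fusion rule $\star$ (values are subsets): $0\star h=h\star0=\{h\}$, $\frac12\star\frac12=\{0\}$, $\frac12\star\frac1{16}=\frac1{16}\star\frac12=\{\frac1{16}\}$, $\frac1{16}\star\frac1{16}=\{0,\frac12\}$; $A(h_0,h_1,h_2,h_3)=\{h: h\in h_2\star h_3,\ h_0\in h_1\star h\}$. For $h\in A(h_0,h_1,h_2,h_3)$, $h'\in A(h_0,h_2,h_1,h_3)$ define $B^{h,h'}_{h_0,h_1,h_2,h_3}$: $B_{*,0,*,*}=B_{*,*,0,*}=1$; $B_{*,\frac12,\frac12,*}=-1$; $B_{a,\frac12,\frac1{16},a'}=B_{a,\frac1{16},\frac12,a'}=i$ if $a$ or $a'$ is $\frac12$, else $-i$; $B^{b,b'}_{a,\frac1{16},\frac1{16},a'}=e^{-\pi i/8}\cdot\{1$ if $a,a'\ne\frac1{16},a=a'$; $i$ if $a,a'\neq\frac1{16},a\ne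 a'$; $\frac{1+i}2$ if $a=a'=\frac1{16},b=b'$; $\frac{1-i}2$ if $a=a'=\frac1{16},b\neq b'\}$. $\mathrm{IS}^{(l,r)}=\mathrm{IS}^l\times\mathrm{IS}^r$, $\lambda=(h_1,..,h_l,\bar h_1,..,\bar h_r)$, $s(\lambda)=\sum h_i-\sum\bar h_j$; $\star$, $A$ componentwise; $B^{\lambda,\lambda'}_{\lambda^0,\dots,\lambda^3}=\prod_{i\le l}B^{h_i,h'_i}_{h^0_i,\dots,h^3_i}\prod_{j\le r}\overline{B^{\bar h_j,\bar h'_j}_{\bar h^0_j,\dots,\bar h^3_j}}$. An $(l,r)$-framed algebra: finite-dimensional $\mathrm{IS}^{(l,r)}$-graded $S=\bigoplus S_\lambda$ over $\mathbb{C}$ with bilinear product, nonzero $1\in S_0$, $a\cdot_\lambda b$ the $S_\lambda$-component of $a\cdot b$, satisfying (FA1) $S_\lambda=0$ unless $s(\lambda)\in\mathbb{Z}$; (FA2) $S_0=\mathbb{C}1$, $1$ a two-sided unit; (FA3) $S_{\lambda^1}\cdot S_{\lambda^2}\subset\bigoplus_{\lambda\in\lambda^1\star\lambda^2}S_\lambda$; (FA4) $a_2\cdot_{\lambda^0}(a_1\cdot_{\lambda'}a_3)=\sum_{\lambda\in A(\lambda^0,\lambda^1,\lambda^2,\lambda^3)}B^{\lambda,\lambda'}_{\lambda^0,\lambda^1,\lambda^2,\lambda^3}a_1\cdot_{\lambda^0}(a_2\cdot_\lambda a_3)$ for $a_i\in S_{\lambda^i}$, $\lambda'\in A(\lambda^0,\lambda^2,\lambda^1,\lambda^3)$.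 Ideal: graded subspace $M$ with $S\cdot M\subset M$; simple: only ideals $0$ and $S$. Identify $\mathrm{IS}$ with $\{(d,c)\in\mathbb{Z}_2^2:dc=0\}$ via $0\leftrightarrow(0,0)$, $\frac12\leftrightarrow(0,1)$, $\frac1{16}\leftrightarrow(1,0)$, and componentwise $\mathrm{IS}^{(l,r)}$ with pairs $(d,c)\in(\mathbb{Z}_2^{l+r})^2$, $dc=0$. For $c\in\mathbb{Z}_2^{l+r}$, $|c|=|c|_l-|c|_r$ where $|c|_l,|c|_r$ count ones in the first $l$ and last $r$ coordinates. $C_S=\{\alpha:S_{(0,\alpha)}\ne0\}$, $I_S=\{(d,c):S_{(d,c)}\ne0\}$. *)

theory Defs
  imports Complex_Main
begin

datatype IS = H0 | Hhalf | H16

lemma UNIV_IS: "(UNIV :: IS set) = {H0, Hhalf, H16}"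
  by (auto intro: IS.exhaust)

instance IS :: finite
  by standard (simp add: UNIV_IS)

fun wt :: "IS \<Rightarrow> real" where
  "wt H0 = 0" | "wt Hhalf = 1/2" | "wt H16 = 1/16"

fun fusion :: "IS \<Rightarrow> IS \<Rightarrow> IS set" where
  "fusion H0 h = {h}"
| "fusion h H0 = {h}"
| "fusion Hhalf Hhalf = {H0}"
| "fusion Hhalf H16 = {H16}"
| "fusion H16 Hhalf = {H16}"
| "fusion H16 H16 = {H0, Hhalf}"

text \<open>The braiding coefficients  B^{h,h'}_{h0,h1,h2,h3}  (argument order: h h' h0 h1 h2 h3).
  Values at index combinations that can never occur (h0 or h3 equal to 1/16 but not both,
  when h1 = h2 = 1/16) are irrelevant and set to 0.\<close>
definition Bc :: "IS \<Rightarrow> IS \<Rightarrow> IS \<Rightarrow> IS \<Rightarrow> IS \<Rightarrow> IS \<Rightarrow> complex" where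
  "Bc b b' a h1 h2 a' =
    (if h1 = H0 \<or> h2 = H0 then 1
     else if h1 = Hhalf \<and> h2 = Hhalf then -1
     else if (h1 = Hhalf \<and> h2 = H16) \<or> (h1 = H16 \<and> h2 = Hhalf) then
       (if a = Hhalf \<or> a' = Hhalf then \<i> else - \<i>)
     else \<comment> \<open>h1 = h2 = 1/16\<close>
       cis (- pi / 8) *
       (if a \<noteq> H16 \<and> a' \<noteq> H16 then (if a = a' then 1 else \<i>)
        else if a = H16 \<and> a' = H16 then (if b = b' then (1 + \<i>) / 2 else (1 - \<i>) / 2)
        else 0))"

text \<open>The first l entries are the h_i, the last r entries are the \<bar>h_j.\<close>
definition grades :: "nat \<Rightarrow> nat \<Rightarrow> IS list set" where
  "grades l r = {g. length g = l + r}"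

definition fusionL :: "IS list \<Rightarrow> IS list \<Rightarrow> IS list set" where
  "fusionL xs ys = {zs. length zs = length xs \<and> length ys = length xs \<and>
                        (\<forall>i<length xs. zs ! i \<in> fusion (xs ! i) (ys ! i))}"

definition AL :: "IS list \<Rightarrow> IS list \<Rightarrow> IS list \<Rightarrow> IS list \<Rightarrow> IS list set" where
  "AL h0 h1 h2 h3 = {h. h \<in> fusionL h2 h3 \<and> h0 \<in> fusionL h1 h}"

definition BL :: "nat \<Rightarrow> nat \<Rightarrow> IS list \<Rightarrow> IS list \<Rightarrow> IS list \<Rightarrow> IS list \<Rightarrow> IS list \<Rightarrow> IS list \<Rightarrow> complex" where
  "BL l r hs hs' h0 h1 h2 h3 =
     (\<Prod>i<l. Bc (hs ! i) (hs' ! i) (h0 ! i) (h1 ! i) (h2 ! i) (h3 ! i)) *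
     (\<Prod>j\<in>{l..<l+r}. cnj (Bc (hs ! j) (hs' ! j) (h0 ! j) (h1 ! j) (h2 ! j) (h3 ! j)))"

definition sL :: "nat \<Rightarrow> nat \<Rightarrow> IS list \<Rightarrow> real" where
  "sL l r g = (\<Sum>i<l. wt (g ! i)) - (\<Sum>j\<in>{l..<l+r}. wt (g ! j))"

definition zeroL :: "nat \<Rightarrow> nat \<Rightarrow> IS list" where
  "zeroL l r = replicate (l + r) H0"

text \<open>The algebra S is the whole carrier type 'v, a vector space over \<complex> with scalar
  multiplication scale; the grading is given by the family of component projections
  proj g (so S_g = range (proj g)); mult is the product and one the unit.\<close>

definition framed_algebra ::
  "nat \<Rightarrow> nat \<Rightarrow> (complex \<Rightarrow> 'v::ab_group_add \<Rightarrow> 'v) \<Rightarrow> ('v \<Rightarrow> 'v \<Rightarrow> 'v)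
     \<Rightarrow> (IS list \<Rightarrow> 'v \<Rightarrow> 'v) \<Rightarrow> 'v \<Rightarrow> bool" where
  "framed_algebra l r scale mult proj one \<longleftrightarrow>
     vector_space scale
   \<and> (\<exists>B. finite B \<and> module.span scale B = UNIV)
   \<comment> \<open>grading S = \<Oplus>_{g \<in> IS^(l,r)} S_g\<close>
   \<and> (\<forall>g. Vector_Spaces.linear scale scale (proj g))
   \<and> (\<forall>g m x. proj g (proj m x) = (if g = m then proj g x else 0))
   \<and> (\<forall>g. g \<notin> grades l r \<longrightarrow> (\<forall>x. proj g x = 0))
   \<and> (\<forall>x. x = (\<Sum>g\<in>grades l r. proj g x))
   \<comment> \<open>bilinear product\<close>
   \<and> (\<forall>z. Vector_Spaces.linear scale scale (\<lambda>x. mult x z)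
          \<and> Vector_Spaces.linear scale scale (mult z))
   \<comment> \<open>(FA1)\<close>
   \<and> (\<forall>g. sL l r g \<notin> \<int> \<longrightarrow> (\<forall>x. proj g x = 0))
   \<comment> \<open>(FA2)\<close>
   \<and> one \<noteq> 0
   \<and> range (proj (zeroL l r)) = {scale c one | c. True}
   \<and> (\<forall>x. mult one x = x \<and> mult x one = x)
   \<comment> \<open>(FA3)\<close>
   \<and> (\<forall>g1 g2 x y. x \<in> range (proj g1) \<longrightarrow> y \<in> range (proj g2) \<longrightarrow>
         (\<forall>g. g \<notin> fusionL g1 g2 \<longrightarrow> proj g (mult x y) = 0))
   \<comment> \<open>(FA4)\<close>
   \<and> (\<forall>g0 g1 g2 g3 g' a1 a2 a3.
         g0 \<in> grades l r \<longrightarrow> g1 \<in> grades l r \<longrightarrow> g2 \<in> grades l r \<longrightarrow> g3 \<in> grades l r \<longrightarrow>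
         a1 \<in> range (proj g1) \<longrightarrow> a2 \<in> range (proj g2) \<longrightarrow> a3 \<in> range (proj g3) \<longrightarrow>
         g' \<in> AL g0 g2 g1 g3 \<longrightarrow>
         proj g0 (mult a2 (proj g' (mult a1 a3))) =
           (\<Sum>g\<in>AL g0 g1 g2 g3.
              scale (BL l r g g' g0 g1 g2 g3) (proj g0 (mult a1 (proj g (mult a2 a3))))))"

definition graded_ideal ::
  "(complex \<Rightarrow> 'v::ab_group_add \<Rightarrow> 'v) \<Rightarrow> ('v \<Rightarrow> 'v \<Rightarrow> 'v) \<Rightarrow> (IS list \<Rightarrow> 'v \<Rightarrow> 'v) \<Rightarrow> 'v set \<Rightarrow> bool" where
  "graded_ideal scale mult proj M \<longleftrightarrow>
     module.subspace scale M
   \<and> (\<forall>g x. x \<in> M \<longrightarrow> proj g x \<in> M)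
   \<and> (\<forall>a x. x \<in> M \<longrightarrow> mult a x \<in> M)"

definition simple_framed_algebra ::
  "nat \<Rightarrow> nat \<Rightarrow> (complex \<Rightarrow> 'v::ab_group_add \<Rightarrow> 'v) \<Rightarrow> ('v \<Rightarrow> 'v \<Rightarrow> 'v)
     \<Rightarrow> (IS list \<Rightarrow> 'v \<Rightarrow> 'v) \<Rightarrow> 'v \<Rightarrow> bool" where
  "simple_framed_algebra l r scale mult proj one \<longleftrightarrow>
     framed_algebra l r scale mult proj one
   \<and> (\<forall>M. graded_ideal scale mult proj M \<longrightarrow> M = {0} \<or> M = UNIV)"

text \<open>(d,c) \<in> (Z_2^{l+r})^2 with dc = 0, as bool lists; 0 \<leftrightarrow> (0,0), 1/2 \<leftrightarrow> (0,1), 1/16 \<leftrightarrow> (1,0).\<close>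
definition enc :: "bool list \<Rightarrow> bool list \<Rightarrow> IS list" where
  "enc d c = map2 (\<lambda>a b. if a then H16 else if b then Hhalf else H0) d c"

definition encC :: "bool list \<Rightarrow> IS list" where
  "encC \<alpha> = enc (replicate (length \<alpha>) False) \<alpha>"

definition C_S :: "nat \<Rightarrow> nat \<Rightarrow> (IS list \<Rightarrow> 'v::zero \<Rightarrow> 'v) \<Rightarrow> bool list set" where
  "C_S l r proj = {\<alpha>. length \<alpha> = l + r \<and> range (proj (encC \<alpha>)) \<noteq> {0}}"

definition I_S :: "nat \<Rightarrow> nat \<Rightarrow> (IS list \<Rightarrow> 'v::zero \<Rightarrow> 'v) \<Rightarrow> (bool list \<times> bool list) set" where
  "I_S l r proj = {(d, c). length d = l + r \<and> length c = l + r \<and>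
                           (\<forall>i<l+r. \<not> (d ! i \<and> c ! i)) \<and> range (proj (enc d c)) \<noteq> {0}}"

definition csize :: "nat \<Rightarrow> nat \<Rightarrow> bool list \<Rightarrow> int" where
  "csize l r c = int (card {i. i < l \<and> c ! i}) - int (card {i. l \<le> i \<and> i < l + r \<and> c ! i})"

definition cmul :: "bool list \<Rightarrow> bool list \<Rightarrow> bool list" where
  "cmul \<alpha>1 \<alpha>2 = map2 (\<and>) \<alpha>1 \<alpha>2"

definition AS0 :: "nat \<Rightarrow> nat \<Rightarrow> (complex \<Rightarrow> 'v::ab_group_add \<Rightarrow> 'v) \<Rightarrow> (IS list \<Rightarrow> 'v \<Rightarrow> 'v) \<Rightarrow> 'v set" where
  "AS0 l r scale proj = module.span scale (\<Union>\<alpha>\<in>{\<alpha>. length \<alpha> = l + r}. range (proj (encC \<alpha>)))"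

end

theory Submission
  imports Defs
begin


fun hm :: "IS \<Rightarrow> IS \<Rightarrow> IS" where
  "hm H0 h = h" | "hm h H0 = h" | "hm Hhalf Hhalf = H0" | "hm Hhalf H16 = H16"
| "hm H16 Hhalf = H16" | "hm H16 H16 = H0"

lemma fusion_hm: "\<not> (a = H16 \<and> b = H16) \<Longrightarrow> fusion a b = {hm a b}"
  by (cases a; cases b) auto

definition mm :: "IS list \<Rightarrow> IS list \<Rightarrow> IS list" where "mm g1 g2 = map2 hm g1 g2"

definition ok2 :: "IS list \<Rightarrow> IS list \<Rightarrow> bool" where
  "ok2 g1 g2 \<longleftrightarrow> length g1 = length g2 \<and> (\<forall>i<length g1. \<not> (g1!i = H16 \<and> g2!i = H16))"

definition ok3 :: "IS list \<Rightarrow> IS list \<Rightarrow> IS list \<Rightarrow> bool" where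
  "ok3 g1 g2 g3 \<longleftrightarrow> length g1 = length g2 \<and> length g2 = length g3 \<and>
     (\<forall>i<length g1. (g1!i = H16 \<longrightarrow> g2!i \<noteq> H16 \<and> g3!i \<noteq> H16) \<and> (g2!i = H16 \<longrightarrow> g3!i \<noteq> H16))"

definition halfg :: "IS list \<Rightarrow> bool" where "halfg g \<longleftrightarrow> (\<forall>i<length g. g!i \<noteq> H16)"

lemma mm_nth[simp]: "i < length g1 \<Longrightarrow> i < length g2 \<Longrightarrow> mm g1 g2 ! i = hm (g1!i) (g2!i)"
  by (simp add: mm_def)
lemma mm_length[simp]: "length (mm g1 g2) = min (length g1) (length g2)"
  by (simp add: mm_def)

lemma fusionL_single: "ok2 g1 g2 \<Longrightarrow> fusionL g1 g2 = {mm g1 g2}"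
  unfolding fusionL_def ok2_def
  by (auto simp: fusion_hm intro!: nth_equalityI)

lemma hm_nH: "a \<noteq> H16 \<Longrightarrow> b \<noteq> H16 \<Longrightarrow> hm a b \<noteq> H16"
  by (cases a; cases b) auto

lemma hm_ca: "(a = H16 \<longrightarrow> b \<noteq> H16 \<and> c \<noteq> H16) \<and> (b = H16 \<longrightarrow> c \<noteq> H16) \<Longrightarrow>
   hm b (hm a c) = hm a (hm b c)"
  by (cases a; cases b; cases c) auto

lemma ok3_facts:
  assumes "ok3 g1 g2 g3"
  shows "ok2 g1 g3" "ok2 g2 g3" "ok2 g1 (mm g2 g3)" "ok2 g2 (mm g1 g3)"
    "mm g2 (mm g1 g3) = mm g1 (mm g2 g3)"
  using assms unfolding ok3_def ok2_def
  apply auto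
  apply (metis IS.exhaust hm.simps)
  apply (metis IS.exhaust hm.simps)
  apply (rule nth_equalityI) apply (auto intro!: hm_ca)
  done

lemma halfg_ok3_1: "halfg g1 \<Longrightarrow> halfg g3 \<Longrightarrow> length g1 = length g2 \<Longrightarrow> length g2 = length g3 \<Longrightarrow> ok3 g1 g2 g3"
  unfolding halfg_def ok3_def by auto
lemma halfg_ok3_2: "halfg g2 \<Longrightarrow> halfg g3 \<Longrightarrow> length g1 = length g2 \<Longrightarrow> length g2 = length g3 \<Longrightarrow> ok3 g1 g2 g3"
  unfolding halfg_def ok3_def by auto
lemma halfg_ok3_3: "halfg g1 \<Longrightarrow> halfg g2 \<Longrightarrow> length g1 = length g2 \<Longrightarrow> length g2 = length g3 \<Longrightarrow> ok3 g1 g2 g3"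
  unfolding halfg_def ok3_def by auto
lemma halfg_ok2: "halfg g1 \<Longrightarrow> length g1 = length g2 \<Longrightarrow> ok2 g1 g2"
  unfolding halfg_def ok2_def by auto
lemma halfg_mm: "halfg g1 \<Longrightarrow> halfg g2 \<Longrightarrow> halfg (mm g1 g2)"
  unfolding halfg_def by (auto simp: hm_nH)

lemma encC_nth[simp]: "i < length a \<Longrightarrow> encC a ! i = (if a!i then Hhalf else H0)"
  by (simp add: encC_def enc_def)
lemma encC_length[simp]: "length (encC a) = length a"
  by (simp add: encC_def enc_def)
lemma halfg_encC: "halfg (encC a)"
  by (simp add: halfg_def)
lemma zeroL_nth[simp]: "i < l + r \<Longrightarrow> zeroL l r ! i = H0" by (simp add: zeroL_def)
lemma zeroL_length[simp]: "length (zeroL l r) = l + r" by (simp add: zeroL_def)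
lemma halfg_zeroL: "halfg (zeroL l r)" by (simp add: halfg_def zeroL_def)

lemma mm_encC: "length a = length b \<Longrightarrow> mm (encC a) (encC b) = encC (map2 (\<noteq>) a b)"
  by (rule nth_equalityI) auto

lemma local3: "x \<noteq> H16 \<Longrightarrow> y \<noteq> H16 \<Longrightarrow>
  Bc (hm (hm x y) H0) (hm z H0) (hm z (hm (hm x y) H0)) z (hm x y) H0
 * Bc (hm z y) (hm x y) (hm x (hm z y)) x z y
 * Bc (hm z H0) (hm y H0) (hm y (hm z H0)) y z H0 = (if hm x y = Hhalf \<and> z = H16 then -1 else 1)"
  by (cases x; cases y; cases z) (simp_all add: Bc_def)

lemma localsw: "x \<noteq> H16 \<Longrightarrow>
  Bc (hm x H0) (hm z H0) (hm z (hm x H0)) z x H0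
 * Bc (hm z H0) (hm x H0) (hm x (hm z H0)) x z H0 = (if x = Hhalf \<and> z = H16 then -1 else 1)"
  by (cases x; cases z) (simp_all add: Bc_def)

lemma local1: "Bc (hm (if b then Hhalf else H0) z) (hm (if a then Hhalf else H0) z)
    (hm (if a then Hhalf else H0) (hm (if b then Hhalf else H0) z))
    (if a then Hhalf else H0) (if b then Hhalf else H0) z = (if a \<and> b then -1 else 1)"
  by (cases a; cases b; cases z) (simp_all add: Bc_def)

definition bv :: "nat \<Rightarrow> nat \<Rightarrow> (nat \<Rightarrow> complex) \<Rightarrow> complex" where
  "bv l r F = (\<Prod>i<l. F i) * (\<Prod>j\<in>{l..<l+r}. cnj (F j))"

lemma BL_bv: "BL l r hs hs' h0 h1 h2 h3 = bv l r (\<lambda>i. Bc (hs ! i) (hs' ! i) (h0 ! i) (h1 ! i) (h2 ! i) (h3 ! i))"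
  by (simp add: BL_def bv_def)

lemma bv_mult: "bv l r F * bv l r G = bv l r (\<lambda>i. F i * G i)"
  by (simp add: bv_def prod.distrib mult_ac)

lemma bv_cong: "(\<And>i. i < l + r \<Longrightarrow> F i = G i) \<Longrightarrow> bv l r F = bv l r G"
  unfolding bv_def by (intro arg_cong2[where f="(*)"] prod.cong) auto

lemma prod_if_neg1: "finite A \<Longrightarrow> (\<Prod>i\<in>A. if P i then (-1::complex) else 1) = (-1) ^ card {i\<in>A. P i}"
proof -
  assume f: "finite A"
  have "(\<Prod>i\<in>A. if P i then (-1::complex) else 1) = (\<Prod>i\<in>A \<inter> {x. P x}. -1) * (\<Prod>i\<in>A \<inter> - {x. P x}. 1)"
    by (rule prod.If_cases[OF f])
  also have "\<dots> = (-1) ^ card (A \<inter> {x. P x})" by simp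
  also have "A \<inter> {x. P x} = {i\<in>A. P i}" by auto
  finally show ?thesis .
qed

lemma bv_sign: "bv l r (\<lambda>i. if P i then -1 else 1) = (-1) ^ card {i. i < l + r \<and> P i}"
proof -
  have "bv l r (\<lambda>i. if P i then -1 else 1) = (\<Prod>i<l. if P i then -1 else 1) * (\<Prod>j\<in>{l..<l+r}. if P j then -1 else 1)"
    unfolding bv_def by (intro arg_cong2[where f="(*)"] prod.cong) auto
  also have "\<dots> = (\<Prod>i\<in>{..<l} \<union> {l..<l+r}. if P i then -1 else 1)"
    by (subst prod.union_disjoint) auto
  also have "{..<l} \<union> {l..<l+r} = {..<l+r}" by auto
  also have "(\<Prod>i\<in>{..<l+r}. if P i then (-1::complex) else 1) = (-1) ^ card {i\<in>{..<l+r}. P i}"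
    by (rule prod_if_neg1) simp
  also have "{i\<in>{..<l+r}. P i} = {i. i < l + r \<and> P i}" by auto
  finally show ?thesis .
qed

lemma BL_comm:
  assumes "length a = l + r" "length b = l + r" "length z = l + r"
  shows "BL l r (mm (encC b) z) (mm (encC a) z) (mm (encC a) (mm (encC b) z)) (encC a) (encC b) z
     = (-1) ^ card {i. i < l + r \<and> (a!i \<and> b!i)}"
  unfolding BL_bv using assms
  by (subst bv_sign[symmetric], intro bv_cong) (simp add: local1)

lemma BL_swap:
  assumes "halfg p" "length p = l + r" "length z = l + r"
  shows "BL l r (mm p (zeroL l r)) (mm z (zeroL l r)) (mm z (mm p (zeroL l r))) z p (zeroL l r)
       * BL l r (mm z (zeroL l r)) (mm p (zeroL l r)) (mm p (mm z (zeroL l r))) p z (zeroL l r)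
     = (-1) ^ card {i. i < l + r \<and> (p!i = Hhalf \<and> z!i = H16)}"
  unfolding BL_bv bv_mult using assms
  by (subst bv_sign[symmetric], intro bv_cong) (simp add: localsw halfg_def)

lemma BL_chain:
  assumes "halfg x" "halfg y" "length x = l + r" "length y = l + r" "length z = l + r"
  shows "BL l r (mm (mm x y) (zeroL l r)) (mm z (zeroL l r)) (mm z (mm (mm x y) (zeroL l r))) z (mm x y) (zeroL l r)
       * BL l r (mm z y) (mm x y) (mm x (mm z y)) x z y
       * BL l r (mm z (zeroL l r)) (mm y (zeroL l r)) (mm y (mm z (zeroL l r))) y z (zeroL l r)
     = (-1) ^ card {i. i < l + r \<and> ((mm x y)!i = Hhalf \<and> z!i = H16)}"
  unfolding BL_bv bv_mult using assms
  by (subst bv_sign[symmetric], intro bv_cong) (simp add: local3 halfg_def)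

lemma csize_sign:
  assumes "length a = l + r" "length b = l + r"
  shows "(-1::complex) ^ card {i. i < l + r \<and> (a!i \<and> b!i)} = (-1) powi csize l r (cmul a b)"
proof -
  let ?A = "{i. i < l \<and> cmul a b ! i}" and ?B = "{i. l \<le> i \<and> i < l + r \<and> cmul a b ! i}"
  have e: "{i. i < l + r \<and> (a!i \<and> b!i)} = ?A \<union> ?B"
    using assms by (auto simp: cmul_def)
  have c: "card (?A \<union> ?B) = card ?A + card ?B"
    by (rule card_Un_disjoint) auto
  have s: "(-1::complex) ^ card ?B * (-1) ^ card ?B = 1"
    by (simp add: power_mult_distrib[symmetric])
  have "(-1::complex) powi csize l r (cmul a b) = (-1) ^ card ?A / (-1) ^ card ?B"
    unfolding csize_def by (simp add: power_int_diff)
  also have "\<dots> = (-1) ^ card ?A * (-1) ^ card ?B"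
    using s by (simp add: field_simps)
  finally show ?thesis unfolding e c by (simp add: power_add)
qed



context
  fixes l r :: nat
    and scale :: "complex \<Rightarrow> 'v::ab_group_add \<Rightarrow> 'v"
    and mult :: "'v \<Rightarrow> 'v \<Rightarrow> 'v"
    and proj :: "IS list \<Rightarrow> 'v \<Rightarrow> 'v"
    and one :: 'v
  assumes FA: "framed_algebra l r scale mult proj one"
begin

lemmas F = FA[unfolded framed_algebra_def]
lemmas VS = F[THEN conjunct1]
lemmas Fproj = F[THEN conjunct2, THEN conjunct2, THEN conjunct1]
lemmas Fpp = F[THEN conjunct2, THEN conjunct2, THEN conjunct2, THEN conjunct1]
lemmas Fdec = F[THEN conjunct2, THEN conjunct2, THEN conjunct2, THEN conjunct2, THEN conjunct2, THEN conjunct1]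
lemmas Fbil = F[THEN conjunct2, THEN conjunct2, THEN conjunct2, THEN conjunct2, THEN conjunct2, THEN conjunct2, THEN conjunct1]
lemmas Frone = F[THEN conjunct2, THEN conjunct2, THEN conjunct2, THEN conjunct2, THEN conjunct2, THEN conjunct2, THEN conjunct2, THEN conjunct2, THEN conjunct2, THEN conjunct1]
lemmas Funit = F[THEN conjunct2, THEN conjunct2, THEN conjunct2, THEN conjunct2, THEN conjunct2, THEN conjunct2, THEN conjunct2, THEN conjunct2, THEN conjunct2, THEN conjunct2, THEN conjunct1]
lemmas F3 = F[THEN conjunct2, THEN conjunct2, THEN conjunct2, THEN conjunct2, THEN conjunct2, THEN conjunct2, THEN conjunct2, THEN conjunct2, THEN conjunct2, THEN conjunct2, THEN conjunct2, THEN conjunct1]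
lemmas F4 = F[THEN conjunct2, THEN conjunct2, THEN conjunct2, THEN conjunct2, THEN conjunct2, THEN conjunct2, THEN conjunct2, THEN conjunct2, THEN conjunct2, THEN conjunct2, THEN conjunct2, THEN conjunct2]

lemma linL: "module_hom scale scale (\<lambda>x. mult x z)"
  using Fbil unfolding linear_iff_module_hom by blast
lemma linR: "module_hom scale scale (mult z)"
  using Fbil unfolding linear_iff_module_hom by blast
lemma linP: "module_hom scale scale (proj g)"
  using Fproj unfolding linear_iff_module_hom by blast

lemma ml_add: "mult (x + y) z = mult x z + mult y z" using module_hom.add[OF linL] .
lemma ml_scale: "mult (scale c x) z = scale c (mult x z)" using module_hom.scale[OF linL] .
lemma ml_zero: "mult 0 z = 0" using module_hom.zero[OF linL] .
lemma mr_add: "mult z (x + y) = mult z x + mult z y" using module_hom.add[OF linR] .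
lemma mr_scale: "mult z (scale c x) = scale c (mult z x)" using module_hom.scale[OF linR] .
lemma mr_zero: "mult z 0 = 0" using module_hom.zero[OF linR] .
lemma mr_sum: "mult z (sum f A) = (\<Sum>a\<in>A. mult z (f a))" using module_hom.sum[OF linR] .
lemma ml_sum: "mult (sum f A) z = (\<Sum>a\<in>A. mult (f a) z)" using module_hom.sum[OF linL] .
lemma proj_zero: "proj g 0 = 0" using module_hom.zero[OF linP] .

lemma proj_id: "x \<in> range (proj g) \<Longrightarrow> proj g x = x"
  using Fpp by auto

lemma decomp: "x = (\<Sum>g\<in>grades l r. proj g x)"
  using Fdec by blast

lemma finite_grades: "finite (grades l r)"
proof -
  have "grades l r = {xs. set xs \<subseteq> UNIV \<and> length xs = l + r}" by (auto simp: grades_def)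
  then show ?thesis using finite_lists_length_eq[of "UNIV :: IS set"] by simp
qed

lemma single:
  assumes "\<And>h. h \<noteq> g \<Longrightarrow> proj h x = 0"
  shows "x \<in> range (proj g)"
proof -
  have "x = (\<Sum>h\<in>grades l r. if h = g then proj g x else 0)"
    by (subst decomp) (intro sum.cong, auto simp: assms)
  also have "\<dots> = (if g \<in> grades l r then proj g x else 0)"
    using finite_grades by simp
  finally show ?thesis by (metis rangeI proj_zero)
qed

lemma mult_grade:
  assumes "x \<in> range (proj g1)" "y \<in> range (proj g2)" "ok2 g1 g2"
  shows "mult x y \<in> range (proj (mm g1 g2))"
proof (rule single)
  fix h assume "h \<noteq> mm g1 g2"
  then have "h \<notin> fusionL g1 g2" using fusionL_single[OF assms(3)] by simp
  then show "proj h (mult x y) = 0" using F3 assms by blast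
qed

lemma one_range: "one \<in> range (proj (zeroL l r))"
proof -
  interpret V: vector_space scale by (rule VS)
  have "scale 1 one \<in> range (proj (zeroL l r))" using Frone by blast
  then show ?thesis by simp
qed

lemma one_r: "mult x one = x" using Funit by blast

lemma grades_mm: "g1 \<in> grades l r \<Longrightarrow> g2 \<in> grades l r \<Longrightarrow> mm g1 g2 \<in> grades l r"
  by (simp add: grades_def)

lemma FA4single:
  assumes g: "g1 \<in> grades l r" "g2 \<in> grades l r" "g3 \<in> grades l r" and ok: "ok3 g1 g2 g3"
    and a: "a1 \<in> range (proj g1)" "a2 \<in> range (proj g2)" "a3 \<in> range (proj g3)"
  shows "mult a2 (mult a1 a3) = scale (BL l r (mm g2 g3) (mm g1 g3) (mm g1 (mm g2 g3)) g1 g2 g3) (mult a1 (mult a2 a3))"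
proof -
  note o = ok3_facts[OF ok]
  define g0 where "g0 = mm g1 (mm g2 g3)"
  have A1: "AL g0 g2 g1 g3 = {mm g1 g3}"
    unfolding AL_def g0_def fusionL_single[OF o(1)] by (auto simp: fusionL_single[OF o(4)] o(5))
  have A2: "AL g0 g1 g2 g3 = {mm g2 g3}"
    unfolding AL_def g0_def fusionL_single[OF o(2)] by (auto simp: fusionL_single[OF o(3)])
  have g0: "g0 \<in> grades l r" unfolding g0_def using g by (simp add: grades_mm)
  have m13: "mult a1 a3 \<in> range (proj (mm g1 g3))" by (rule mult_grade[OF a(1) a(3) o(1)])
  have m23: "mult a2 a3 \<in> range (proj (mm g2 g3))" by (rule mult_grade[OF a(2) a(3) o(2)])
  have L: "mult a2 (mult a1 a3) \<in> range (proj g0)"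
    using mult_grade[OF a(2) m13 o(4)] unfolding o(5) g0_def .
  have R: "mult a1 (mult a2 a3) \<in> range (proj g0)"
    using mult_grade[OF a(1) m23 o(3)] unfolding g0_def .
  have gm: "mm g1 g3 \<in> AL g0 g2 g1 g3" using A1 by simp
  have "proj g0 (mult a2 (proj (mm g1 g3) (mult a1 a3))) =
        (\<Sum>g\<in>AL g0 g1 g2 g3. scale (BL l r g (mm g1 g3) g0 g1 g2 g3) (proj g0 (mult a1 (proj g (mult a2 a3)))))"
    by (rule F4[rule_format, OF g0 g a gm])
  then have "proj g0 (mult a2 (proj (mm g1 g3) (mult a1 a3))) =
     scale (BL l r (mm g2 g3) (mm g1 g3) g0 g1 g2 g3) (proj g0 (mult a1 (proj (mm g2 g3) (mult a2 a3))))"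
    using A2 by simp
  then show ?thesis using proj_id[OF m13] proj_id[OF m23] proj_id[OF L] proj_id[OF R] unfolding g0_def by simp
qed


lemma neg_self_zero:
  assumes "w = scale (-1) w" shows "w = 0"
proof -
  interpret V: vector_space scale by (rule VS)
  have "scale 2 w = w + w" using V.scale_left_distrib[of 1 1 w] by simp
  also have "\<dots> = 0"
  proof -
    have "w = - w" using assms by (simp add: V.scale_minus_left)
    then show ?thesis by (metis add.left_inverse)
  qed
  finally have "scale (1/2) (scale 2 w) = 0" by simp
  then show ?thesis by simp
qed

lemma Z_grades: "zeroL l r \<in> grades l r" by (simp add: grades_def)

lemma vanish:
  assumes hp: "halfg p" "p \<in> grades l r" and hz: "z \<in> grades l r"
    and x: "x \<in> range (proj p)" and v: "v \<in> range (proj z)"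
    and odd: "odd (card {i. i < l + r \<and> (p!i = Hhalf \<and> z!i = H16)})"
  shows "mult x v = 0"
proof -
  interpret V: vector_space scale by (rule VS)
  have lp: "length p = l + r" and lz: "length z = l + r" using hp hz by (auto simp: grades_def)
  have o1: "ok3 z p (zeroL l r)" by (rule halfg_ok3_2) (auto simp: hp lp lz halfg_zeroL)
  have o2: "ok3 p z (zeroL l r)" by (rule halfg_ok3_1) (auto simp: hp lp lz halfg_zeroL)
  note e1 = FA4single[OF hz hp(2) Z_grades o1 v x one_range]
  note e2 = FA4single[OF hp(2) hz Z_grades o2 x v one_range]
  define B1 where "B1 = BL l r (mm p (zeroL l r)) (mm z (zeroL l r)) (mm z (mm p (zeroL l r))) z p (zeroL l r)"
  define B2 where "B2 = BL l r (mm z (zeroL l r)) (mm p (zeroL l r)) (mm p (mm z (zeroL l r))) p z (zeroL l r)"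
  have s1: "mult x v = scale B1 (mult v x)" using e1 unfolding B1_def by (simp add: one_r)
  have s2: "mult v x = scale B2 (mult x v)" using e2 unfolding B2_def by (simp add: one_r)
  have "mult x v = scale B1 (scale B2 (mult x v))" using s1 unfolding s2 .
  also have "\<dots> = scale (B1 * B2) (mult x v)" by simp
  also have "\<dots> = scale (-1) (mult x v)" unfolding B1_def B2_def BL_swap[OF hp(1) lp lz] using odd by simp
  finally show ?thesis by (rule neg_self_zero)
qed

lemma assoc_gen:
  assumes hx: "halfg x" "x \<in> grades l r" and hy: "halfg y" "y \<in> grades l r" and hz: "z \<in> grades l r"
    and a1: "a1 \<in> range (proj x)" and a2: "a2 \<in> range (proj y)" and v: "v \<in> range (proj z)"
  shows "mult (mult a1 a2) v = mult a1 (mult a2 v)"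
proof -
  interpret V: vector_space scale by (rule VS)
  have lx: "length x = l + r" and ly: "length y = l + r" and lz: "length z = l + r"
    using hx hy hz by (auto simp: grades_def)
  define p where "p = mm x y"
  have hp: "halfg p" "p \<in> grades l r" unfolding p_def by (rule halfg_mm[OF hx(1) hy(1)], rule grades_mm[OF hx(2) hy(2)])
  have X: "mult a1 a2 \<in> range (proj p)" unfolding p_def by (rule mult_grade[OF a1 a2 halfg_ok2[OF hx(1)]]) (simp add: lx ly)
  have lp: "length p = l + r" using hp(2) by (simp add: grades_def)
  have o1: "ok3 z p (zeroL l r)" by (rule halfg_ok3_2) (auto simp: hp lp lz halfg_zeroL)
  have o2: "ok3 x z y" by (rule halfg_ok3_1) (auto simp: hx hy lx ly lz)
  have o3: "ok3 y z (zeroL l r)" by (rule halfg_ok3_1) (auto simp: hy ly lz halfg_zeroL)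
  note e1 = FA4single[OF hz hp(2) Z_grades o1 v X one_range]
  note e2 = FA4single[OF hx(2) hz hy(2) o2 a1 v a2]
  note e3 = FA4single[OF hy(2) hz Z_grades o3 a2 v one_range]
  define N where "N = card {i. i < l + r \<and> (p!i = Hhalf \<and> z!i = H16)}"
  have eq: "mult (mult a1 a2) v = scale ((-1) ^ N) (mult a1 (mult a2 v))"
    using e1 e2 e3 BL_chain[OF hx(1) hy(1) lx ly lz]
    by (simp add: one_r mr_scale p_def N_def)
  show ?thesis
  proof (cases "even N")
    case True then show ?thesis using eq by simp
  next
    case False
    then have "mult (mult a1 a2) v = 0" using vanish[OF hp hz X v] N_def by simp
    then have "scale (-1) (mult a1 (mult a2 v)) = 0" using eq False by simp
    then have "scale (-1) (scale (-1) (mult a1 (mult a2 v))) = 0" by simp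
    then have "mult a1 (mult a2 v) = 0" by simp
    then show ?thesis using \<open>mult (mult a1 a2) v = 0\<close> by simp
  qed
qed

lemma comm_gen:
  assumes la: "length a = l + r" and lb: "length b = l + r" and hz: "z \<in> grades l r"
    and a1: "a1 \<in> range (proj (encC a))" and a2: "a2 \<in> range (proj (encC b))" and v: "v \<in> range (proj z)"
  shows "mult a2 (mult a1 v) = scale ((-1) powi csize l r (cmul a b)) (mult a1 (mult a2 v))"
proof -
  have lz: "length z = l + r" using hz by (simp add: grades_def)
  have ga: "encC a \<in> grades l r" and gb: "encC b \<in> grades l r" using la lb by (auto simp: grades_def)
  have o: "ok3 (encC a) (encC b) z" by (rule halfg_ok3_3) (auto simp: halfg_encC la lb lz)
  show ?thesis using FA4single[OF ga gb hz o a1 a2 v] BL_comm[OF la lb lz] csize_sign[OF la lb] by simp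
qed

definition GG where "GG = (\<Union>\<alpha>\<in>{\<alpha>. length \<alpha> = l + r}. range (proj (encC \<alpha>)))"

lemma GG_mult: "a \<in> GG \<Longrightarrow> b \<in> GG \<Longrightarrow> mult a b \<in> GG"
proof -
  assume "a \<in> GG" "b \<in> GG"
  then obtain \<alpha>1 \<alpha>2 where l: "length \<alpha>1 = l + r" "length \<alpha>2 = l + r"
    and a: "a \<in> range (proj (encC \<alpha>1))" and b: "b \<in> range (proj (encC \<alpha>2))"
    unfolding GG_def by blast
  have "mult a b \<in> range (proj (mm (encC \<alpha>1) (encC \<alpha>2)))"
    by (rule mult_grade[OF a b halfg_ok2[OF halfg_encC]]) (simp add: l)
  then have "mult a b \<in> range (proj (encC (map2 (\<noteq>) \<alpha>1 \<alpha>2)))" using mm_encC l by simp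
  moreover have "length (map2 (\<noteq>) \<alpha>1 \<alpha>2) = l + r" using l by simp
  ultimately show ?thesis unfolding GG_def by blast
qed

lemma GG_assoc: "a \<in> GG \<Longrightarrow> b \<in> GG \<Longrightarrow> mult a (mult b w) = mult (mult a b) w"
proof -
  assume "a \<in> GG" "b \<in> GG"
  then obtain \<alpha>1 \<alpha>2 where l: "length \<alpha>1 = l + r" "length \<alpha>2 = l + r"
    and a: "a \<in> range (proj (encC \<alpha>1))" and b: "b \<in> range (proj (encC \<alpha>2))"
    unfolding GG_def by blast
  have g: "encC \<alpha>1 \<in> grades l r" "encC \<alpha>2 \<in> grades l r" using l by (auto simp: grades_def)
  have "mult a (mult b w) = mult a (mult b (\<Sum>g\<in>grades l r. proj g w))" by (subst decomp) (rule refl)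
  also have "\<dots> = (\<Sum>g\<in>grades l r. mult a (mult b (proj g w)))" by (simp add: mr_sum)
  also have "\<dots> = (\<Sum>g\<in>grades l r. mult (mult a b) (proj g w))"
    by (rule sum.cong[OF refl], rule assoc_gen[OF halfg_encC g(1) halfg_encC g(2) _ a b rangeI, symmetric], assumption)
  also have "\<dots> = mult (mult a b) (\<Sum>g\<in>grades l r. proj g w)" by (simp add: mr_sum)
  also have "\<dots> = mult (mult a b) w" by (subst (2) decomp) (rule refl)
  finally show ?thesis .
qed

lemma span_mult:
  assumes x: "x \<in> module.span scale GG" and y: "y \<in> module.span scale GG"
  shows "mult x y \<in> module.span scale GG"
proof -
  interpret V: vector_space scale by (rule VS)
  have gen: "mult a y \<in> V.span GG" if a: "a \<in> GG" for a
    using y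
  proof (induction rule: V.span_induct_alt)
    case base then show ?case by (simp add: mr_zero V.span_zero)
    case (step c b y')
    then show ?case using GG_mult[OF a step(1)]
      by (simp add: mr_add mr_scale V.span_add V.span_scale V.span_base)
  qed
  show ?thesis using x
  proof (induction rule: V.span_induct_alt)
    case base then show ?case by (simp add: ml_zero V.span_zero)
    case (step c a x')
    then show ?case using gen[OF step(1)]
      by (simp add: ml_add ml_scale V.span_add V.span_scale)
  qed
qed

lemma span_assoc:
  assumes x: "x \<in> module.span scale GG" and y: "y \<in> module.span scale GG"
  shows "mult x (mult y w) = mult (mult x y) w"
proof -
  interpret V: vector_space scale by (rule VS)
  have gen: "mult a (mult y w) = mult (mult a y) w" if a: "a \<in> GG" for a
    using y
  proof (induction rule: V.span_induct_alt)
    case base then show ?case by (simp add: mr_zero ml_zero)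
    case (step c b y')
    then show ?case using GG_assoc[OF a step(1)]
      by (simp add: mr_add mr_scale ml_add ml_scale)
  qed
  show ?thesis using x
  proof (induction rule: V.span_induct_alt)
    case base then show ?case by (simp add: mr_zero ml_zero)
    case (step c a x')
    then show ?case using gen[OF step(1)]
      by (simp add: mr_add mr_scale ml_add ml_scale)
  qed
qed

end


theorem mainTheorem6:
  fixes l r :: nat
    and scale :: "complex \<Rightarrow> 'v::ab_group_add \<Rightarrow> 'v"
    and mult :: "'v \<Rightarrow> 'v \<Rightarrow> 'v"
    and proj :: "IS list \<Rightarrow> 'v \<Rightarrow> 'v"
    and one :: 'v
    and \<alpha>1 \<alpha>2 d c :: "bool list"
    and a1 a2 v :: 'v
  assumes S: "simple_framed_algebra l r scale mult proj one"
    and h\<alpha>1: "\<alpha>1 \<in> C_S l r proj" and h\<alpha>2: "\<alpha>2 \<in> C_S l r proj"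
    and hdc: "(d, c) \<in> I_S l r proj"
    and ha1: "a1 \<in> range (proj (encC \<alpha>1))"
    and ha2: "a2 \<in> range (proj (encC \<alpha>2))"
    and hv: "v \<in> range (proj (enc d c))"
  shows "mult a2 (mult a1 v) = scale ((-1) powi csize l r (cmul \<alpha>1 \<alpha>2)) (mult a1 (mult a2 v))
       \<and> mult a1 (mult a2 v) = mult (mult a1 a2) v
       \<and> (\<forall>x\<in>AS0 l r scale proj. \<forall>y\<in>AS0 l r scale proj. mult x y \<in> AS0 l r scale proj)
       \<and> (\<forall>x\<in>AS0 l r scale proj. \<forall>y\<in>AS0 l r scale proj. \<forall>z\<in>AS0 l r scale proj.
             mult (mult x y) z = mult x (mult y z))
       \<and> (\<forall>x\<in>AS0 l r scale proj. \<forall>y\<in>AS0 l r scale proj. \<forall>w.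
             mult x (mult y w) = mult (mult x y) w)"
proof -
  have FA: "framed_algebra l r scale mult proj one" using S unfolding simple_framed_algebra_def by blast
  have la: "length \<alpha>1 = l + r" using h\<alpha>1 by (simp add: C_S_def)
  have lb: "length \<alpha>2 = l + r" using h\<alpha>2 by (simp add: C_S_def)
  have hz: "enc d c \<in> grades l r" using hdc by (simp add: I_S_def grades_def enc_def)
  have ga: "encC \<alpha>1 \<in> grades l r" and gb: "encC \<alpha>2 \<in> grades l r" using la lb by (auto simp: grades_def)
  have c1: "mult a2 (mult a1 v) = scale ((-1) powi csize l r (cmul \<alpha>1 \<alpha>2)) (mult a1 (mult a2 v))"
    by (rule comm_gen[OF FA la lb hz ha1 ha2 hv])
  have c2: "mult a1 (mult a2 v) = mult (mult a1 a2) v"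
    by (rule assoc_gen[OF FA halfg_encC ga halfg_encC gb hz ha1 ha2 hv, symmetric])
  have AS: "AS0 l r scale proj = module.span scale (GG l r proj)"
    by (simp add: AS0_def GG_def[OF FA])
  have c3: "\<forall>x\<in>AS0 l r scale proj. \<forall>y\<in>AS0 l r scale proj. mult x y \<in> AS0 l r scale proj"
    unfolding AS using span_mult[OF FA] by blast
  have c5: "\<forall>x\<in>AS0 l r scale proj. \<forall>y\<in>AS0 l r scale proj. \<forall>w. mult x (mult y w) = mult (mult x y) w"
    unfolding AS using span_assoc[OF FA] by blast
  show ?thesis using c1 c2 c3 c5 by metis
qed
end
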